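(* Let $\mathcal N$ be a network with a binary collision profile and character $D^*$, let $S$ be a schedule, and let $T\ge\max(D^*,1)$ be an integer such that $S[T,k]\in\mathcal M_T$ and $(S[T,k],S[T,k+1])\in\mathcal E_T$ for every $k\in\mathbb Z$. Then $S$ is collision free.
   Context: A network is a triple $\mathcal N=(\mathcal L,\mathcal I,D_{\mathcal L})$ where $\mathcal L$ is a finite nonempty set of links, each $\mathcal I(l)$ is a collection of nonempty subsets of $\mathcal L$, and $D_{\mathcal L}$ assigns an integer $D_{\mathcal L}(l,l')$ to every pair with $l'\in\phi$ for some $\phi\in\mathcal I(l)$. The profile is binary if every $\phi\in\mathcal I(l)$ is a singleton. The character is $D^*=\max_{l}\max_{\phi\in\mathcal I(l)}\max_{l'\in\phi}|D_{\mathcal L}(l,l')|$ (0 if there are no collision sets). A schedule is a map $S:\mathcal L\times\mathbb Z\to\{0,1\}$; $S(l,t)$ has a collision if there is $\phi\in\mathcal I(l)$ with $S(l',t+D_{\mathcal L}(l,l'))=1$ for all $l'\in\phi$; $S$ is collision free if no $(l,t)$ with $S(l,t)=1$ has a collision. $S[T,k]$ is the $|\mathcal L|\times T$ binary matrix with $S[T,k](l,j)=S(l,kT+j)$, $j=0,\dots,T-1$. The scheduling graph $(\mathcal M_T,\mathcal E_T)$ has vertex set $\mathcal M_T$ = all $|\mathcal L|\times T$ binary matrices $A$ with $A=S'[T,0]$ for some collision-free schedule $S'$, and edge set $\mathcal E_T$ = all ordered pairs $(A,B)$ with $A=S'[T,0]$, $B=S'[T,1]$ for some collision-free schedule $S'$.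 *)

theory Defs
  imports Main
begin

text \<open>A network: links L (finite, nonempty), collision profile I, delays D.
  Schedules are maps from links and integer time slots to booleans (True = 1).\<close>

definition network :: "'l set \<Rightarrow> ('l \<Rightarrow> 'l set set) \<Rightarrow> bool" where
  "network L I \<longleftrightarrow> finite L \<and> L \<noteq> {} \<and>
     (\<forall>l\<in>L. \<forall>\<phi>\<in>I l. \<phi> \<noteq> {} \<and> \<phi> \<subseteq> L)"

definition binary_profile :: "'l set \<Rightarrow> ('l \<Rightarrow> 'l set set) \<Rightarrow> bool" where
  "binary_profile L I \<longleftrightarrow> (\<forall>l\<in>L. \<forall>\<phi>\<in>I l. \<exists>l'. \<phi> = {l'})"

definition character :: "'l set \<Rightarrow> ('l \<Rightarrow> 'l set set) \<Rightarrow> ('l \<Rightarrow> 'l \<Rightarrow> int) \<Rightarrow> int" where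
  "character L I D =
     (if {(l, l'). l \<in> L \<and> (\<exists>\<phi>\<in>I l. l' \<in> \<phi>)} = {} then 0
      else Max ((\<lambda>(l, l'). \<bar>D l l'\<bar>) ` {(l, l'). l \<in> L \<and> (\<exists>\<phi>\<in>I l. l' \<in> \<phi>)}))"

definition has_collision ::
  "('l \<Rightarrow> 'l set set) \<Rightarrow> ('l \<Rightarrow> 'l \<Rightarrow> int) \<Rightarrow> ('l \<Rightarrow> int \<Rightarrow> bool) \<Rightarrow> 'l \<Rightarrow> int \<Rightarrow> bool" where
  "has_collision I D S l t \<longleftrightarrow> (\<exists>\<phi>\<in>I l. \<forall>l'\<in>\<phi>. S l' (t + D l l'))"

definition collision_free ::
  "'l set \<Rightarrow> ('l \<Rightarrow> 'l set set) \<Rightarrow> ('l \<Rightarrow> 'l \<Rightarrow> int) \<Rightarrow> ('l \<Rightarrow> int \<Rightarrow> bool) \<Rightarrow> bool" where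
  "collision_free L I D S \<longleftrightarrow> (\<forall>l\<in>L. \<forall>t. S l t \<longrightarrow> \<not> has_collision I D S l t)"

text \<open>The |L| x T binary matrix S[T,k], represented as a function on L x {0..<T}
  (canonically False outside that index range).\<close>

definition block :: "'l set \<Rightarrow> ('l \<Rightarrow> int \<Rightarrow> bool) \<Rightarrow> nat \<Rightarrow> int \<Rightarrow> ('l \<Rightarrow> nat \<Rightarrow> bool)" where
  "block L S T k = (\<lambda>l j. l \<in> L \<and> j < T \<and> S l (k * int T + int j))"

definition sched_vertices ::
  "'l set \<Rightarrow> ('l \<Rightarrow> 'l set set) \<Rightarrow> ('l \<Rightarrow> 'l \<Rightarrow> int) \<Rightarrow> nat \<Rightarrow> ('l \<Rightarrow> nat \<Rightarrow> bool) set" where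
  "sched_vertices L I D T = {A. \<exists>S'. collision_free L I D S' \<and> A = block L S' T 0}"

definition sched_edges ::
  "'l set \<Rightarrow> ('l \<Rightarrow> 'l set set) \<Rightarrow> ('l \<Rightarrow> 'l \<Rightarrow> int) \<Rightarrow> nat \<Rightarrow>
     (('l \<Rightarrow> nat \<Rightarrow> bool) \<times> ('l \<Rightarrow> nat \<Rightarrow> bool)) set" where
  "sched_edges L I D T = {(A, B). \<exists>S'. collision_free L I D S' \<and>
      A = block L S' T 0 \<and> B = block L S' T 1}"

end

theory Submission
  imports Defs
begin

lemma agree:
  assumes "block L S' T 0 = block L S T k" "block L S' T 1 = block L S T (k+1)"
    "l \<in> L" "0 \<le> u" "u < 2 * int T"
  shows "S' l u = S l (k * int T + u)"
proof (cases "u < int T")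
  case True
  have "block L S' T 0 l (nat u) = block L S T k l (nat u)" using assms(1) by simp
  moreover have "nat u < T" using True assms(4) by simp
  ultimately show ?thesis using assms(3,4) by (simp add: block_def)
next
  case False
  have "block L S' T 1 l (nat (u - int T)) = block L S T (k+1) l (nat (u - int T))" using assms(2) by simp
  moreover have "nat (u - int T) < T" using False assms(5) by simp
  ultimately show ?thesis using False assms(3,4,5) by (simp add: block_def algebra_simps)
qed

lemma char_bound:
  assumes "network L I" "l \<in> L" "\<phi> \<in> I l" "l' \<in> \<phi>"
  shows "\<bar>D l l'\<bar> \<le> character L I D"
proof -
  let ?P = "{(l, l'). l \<in> L \<and> (\<exists>\<phi>\<in>I l. l' \<in> \<phi>)}"
  have fin: "finite ?P"
    by (rule finite_subset[of _ "L \<times> L"]) (use assms(1) in \<open>auto simp: network_def\<close>)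
  have mem: "(l, l') \<in> ?P" using assms by auto
  hence ne: "?P \<noteq> {}" by auto
  have "\<bar>D l l'\<bar> \<le> Max ((\<lambda>(l, l'). \<bar>D l l'\<bar>) ` ?P)"
    by (rule Max_ge) (use fin mem in auto)
  thus ?thesis using ne unfolding character_def by (simp only: if_False)
qed

theorem theorem5:
  fixes L :: "'l set" and I :: "'l \<Rightarrow> 'l set set" and D :: "'l \<Rightarrow> 'l \<Rightarrow> int"
    and S :: "'l \<Rightarrow> int \<Rightarrow> bool" and T :: nat
  assumes "network L I"
    and "binary_profile L I"
    and "int T \<ge> max (character L I D) 1"
    and "\<forall>k::int. block L S T k \<in> sched_vertices L I D T"
    and "\<forall>k::int. (block L S T k, block L S T (k + 1)) \<in> sched_edges L I D T"
  shows "collision_free L I D S"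
  unfolding collision_free_def
proof (intro ballI allI impI notI)
  fix l t assume l: "l \<in> L" and St: "S l t" and hc: "has_collision I D S l t"
  then obtain \<phi> where ph: "\<phi> \<in> I l" and all: "\<forall>l'\<in>\<phi>. S l' (t + D l l')"
    unfolding has_collision_def by auto
  obtain l' where l': "\<phi> = {l'}" using assms(2) l ph unfolding binary_profile_def by blast
  have l'L: "l' \<in> L" using assms(1) l ph l' unfolding network_def by auto
  define d where "d = D l l'"
  have dT: "\<bar>d\<bar> \<le> int T" proof -
    have "\<bar>D l l'\<bar> \<le> character L I D" using char_bound[OF assms(1) l ph, of l' D] l' by simp
    thus ?thesis using assms(3) d_def by simp
  qed
  have Tpos: "int T \<ge> 1" using assms(3) by simp
  have S2: "S l' (t + d)" using all l' d_def by simp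
  define k where "k = t div int T"
  have kt: "k * int T \<le> t" "t < k * int T + int T"
  proof -
    have e: "t = k * int T + t mod int T" unfolding k_def by simp
    have "0 \<le> t mod int T" "t mod int T < int T" using Tpos by simp_all
    then show "k * int T \<le> t" "t < k * int T + int T" using e by linarith+
  qed
  obtain m where m: "m * int T \<le> t" "m * int T \<le> t + d" "t < m * int T + 2 * int T"
    "t + d < m * int T + 2 * int T"
  proof (cases "k * int T \<le> t + d")
    case True then show ?thesis using that[of k] kt dT by auto
  next
    case False then show ?thesis using that[of "k - 1"] kt dT by (auto simp: algebra_simps)
  qed
  obtain S' where cf: "collision_free L I D S'" and b0: "block L S T m = block L S' T 0"
    and b1: "block L S T (m+1) = block L S' T 1"
    using assms(5) unfolding sched_edges_def by blast
  have e1: "S' l (t - m * int T) = S l t"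
    using agree[OF b0[symmetric] b1[symmetric] l, of "t - m * int T"] m by simp
  have e2: "S' l' (t - m * int T + d) = S l' (t + d)"
    using agree[OF b0[symmetric] b1[symmetric] l'L, of "t - m * int T + d"] m by simp
  have "has_collision I D S' l (t - m * int T)"
    unfolding has_collision_def using ph l' e2 S2 d_def by auto
  moreover have "S' l (t - m * int T)" using e1 St by simp
  ultimately show False using cf l unfolding collision_free_def by blast
qed

end
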